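(* Let $X$ be a periodic commutative semigroup with a unique idempotent $e$. If the maximal subgroup $H_e$ of $X$ is bounded and for every infinite set $A\subseteq X$ the set $AA=\{xy:x,y\in A\}$ is not a singleton, then $X$ is $\mathsf{T_{1}S}$-closed.
   Context: $\mathsf{T_{1}S}$ is the class of topological semigroups satisfying the $T_1$ separation axiom. A semigroup $X$ is $\mathsf{T_{1}S}$-closed if for every isomorphic topological embedding of $X$ (with discrete topology) into some $Y\in\mathsf{T_{1}S}$ the image is closed in $Y$. Periodic: every element has an idempotent power. $H_e$ is the maximal subgroup containing $e$; a group is bounded if some exponent $n\ge1$ satisfies $x^n=e$ for all $x$. *)

theory Defs
  imports "HOL-Analysis.Analysis"
begin

text \<open>Positive powers in a semigroup (no unit needed): spow x n = x^n for n \<ge> 1.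
  The value at n = 0 is irrelevant; all uses are guarded by n \<ge> 1.\<close>
fun spow :: "'a::semigroup_mult \<Rightarrow> nat \<Rightarrow> 'a" where
  "spow x 0 = x"
| "spow x (Suc 0) = x"
| "spow x (Suc (Suc n)) = spow x (Suc n) * x"

definition idempotent :: "'a::semigroup_mult \<Rightarrow> bool" where
  "idempotent x \<longleftrightarrow> x * x = x"

definition periodic_semigroup :: "'a::semigroup_mult itself \<Rightarrow> bool" where
  "periodic_semigroup _ \<longleftrightarrow> (\<forall>x::'a. \<exists>n\<ge>1. idempotent (spow x n))"

definition is_subgroup :: "'a::semigroup_mult set \<Rightarrow> bool" where
  "is_subgroup G \<longleftrightarrow> (\<forall>x\<in>G. \<forall>y\<in>G. x * y \<in> G) \<and>
     (\<exists>u\<in>G. \<forall>x\<in>G. u * x = x \<and> x * u = x \<and> (\<exists>y\<in>G. x * y = u \<and> y * x = u))"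

definition max_subgroup :: "'a::semigroup_mult \<Rightarrow> 'a set" where
  "max_subgroup e = \<Union>{G. e \<in> G \<and> is_subgroup G}"

definition bounded_group :: "'a::semigroup_mult set \<Rightarrow> 'a \<Rightarrow> bool" where
  "bounded_group H e \<longleftrightarrow> (\<exists>n\<ge>1. \<forall>x\<in>H. spow x n = e)"

text \<open>T1S-closedness relative to the T1 topological semigroups carried by a type 'b:
  every isomorphic topological embedding of the discrete semigroup 'a into 'b has closed image.\<close>
definition T1S_closed_in :: "'b::{topological_semigroup_mult,t1_space} itself \<Rightarrow> 'a::semigroup_mult itself \<Rightarrow> bool" where
  "T1S_closed_in _ _ \<longleftrightarrow>
     (\<forall>h::'a \<Rightarrow> 'b. (\<forall>x y. h (x * y) = h x * h y) \<and>
        embedding_map (discrete_topology UNIV) euclidean h \<longrightarrow> closed (range h))"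

end

theory Submission
  imports Defs
begin



lemma spow_1[simp]: "spow x (Suc 0) = x" by simp

lemma spow_Suc: "n \<ge> 1 \<Longrightarrow> spow x (Suc n) = spow x n * x"
  by (cases n) auto

lemma spow_add: "a \<ge> 1 \<Longrightarrow> b \<ge> 1 \<Longrightarrow> spow x (a + b) = spow x a * spow x b"
proof (induction b)
  case 0 then show ?case by simp
next
  case (Suc b)
  show ?case
  proof (cases b)
    case 0 then show ?thesis using Suc.prems by (simp add: spow_Suc)
  next
    case (Suc b')
    then have "spow x (a + Suc b) = spow x (a + b) * x" using Suc.prems spow_Suc[of "a+b" x] by simp
    also have "\<dots> = spow x a * spow x b * x" using Suc.IH Suc.prems \<open>b = Suc b'\<close> by simp
    also have "\<dots> = spow x a * spow x (Suc b)" using spow_Suc[of b x] \<open>b = Suc b'\<close> by (simp add: mult.assoc)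
    finally show ?thesis .
  qed
qed

lemma spow_hom: "(\<And>x y. h (x * y) = h x * h y) \<Longrightarrow> h (spow x k) = spow (h x) k"
proof (induction k)
  case 0 then show ?case by simp
next
  case (Suc k) then show ?case by (cases k) auto
qed

lemma spow_mult_distrib: "spow ((x::'a::ab_semigroup_mult) * y) k = spow x k * spow y k"
proof (induction k)
  case 0 then show ?case by simp
next
  case (Suc k) then show ?case by (cases k) (auto simp: ac_simps)
qed

lemma tendsto_spow: "(f \<longlongrightarrow> (a::'b::topological_semigroup_mult)) F \<Longrightarrow> ((\<lambda>x. spow (f x) k) \<longlongrightarrow> spow a k) F"
proof (induction k)
  case 0 then show ?case by simp
next
  case (Suc k) then show ?case by (cases k) (auto intro: tendsto_mult)
qed

lemma continuous_on_spow: "continuous_on S (f::_\<Rightarrow>'b::topological_semigroup_mult) \<Longrightarrow> continuous_on S (\<lambda>x. spow (f x) k)"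
proof (induction k)
  case 0 then show ?case by simp
next
  case (Suc k) then show ?case by (cases k) (auto intro: continuous_on_mult')
qed

definition itm :: "'a::semigroup_mult \<Rightarrow> nat \<Rightarrow> 'a \<Rightarrow> 'a" where
  "itm a r c = ((*) a ^^ r) c"

lemma itm_0[simp]: "itm a 0 c = c" by (simp add: itm_def)
lemma itm_Suc: "itm a (Suc r) c = a * itm a r c" by (simp add: itm_def)
lemma itm_add: "itm a r (itm a s c) = itm a (r + s) c" by (simp add: itm_def funpow_add)
lemma itm_mult: "itm a r c * d = itm a r (c * d)"
  by (induction r) (auto simp: itm_Suc mult.assoc)
lemma itm_spow: "r \<ge> 1 \<Longrightarrow> itm a r (c::'a::ab_semigroup_mult) = spow a r * c"
proof (induction r)
  case 0 then show ?case by simp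
next
  case (Suc r) then show ?case
    by (cases r) (auto simp: itm_Suc ac_simps)
qed
lemma itm_prod: "itm a r (c::'a::ab_semigroup_mult) * itm a s d = itm a (r + s) (c * d)"
proof -
  have "itm a r c * itm a s d = itm a r (itm a s d * c)" by (simp add: itm_mult mult.commute)
  also have "\<dots> = itm a r (itm a s (d * c))" by (simp add: itm_mult)
  also have "\<dots> = itm a (r + s) (c * d)" by (simp add: itm_add mult.commute)
  finally show ?thesis .
qed

lemma INF_at:
  fixes t :: "'b::t1_space"
  assumes "t \<notin> S" "t \<in> closure S" "eventually P (at t within S)"
  shows "infinite {x\<in>S. P x}"
proof
  assume fin: "finite {x\<in>S. P x}"
  from assms(3) obtain U where U: "open U" "t \<in> U" "\<forall>x\<in>U. x \<noteq> t \<longrightarrow> x \<in> S \<longrightarrow> P x"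
    unfolding eventually_at_topological by blast
  let ?V = "U - {x\<in>S. P x}"
  have "open ?V" using U(1) fin by (intro open_Diff finite_imp_closed)
  have "t \<in> ?V" using U(2) assms(1) by auto
  have "?V \<inter> closure S \<noteq> {}" using \<open>t \<in> ?V\<close> assms(2) by auto
  then have "?V \<inter> S \<noteq> {}" using open_Int_closure_eq_empty[OF \<open>open ?V\<close>] by blast
  then obtain x where "x \<in> ?V" "x \<in> S" by blast
  then show False using U(3) assms(1) by auto
qed




locale LL =
  fixes e :: "'a::ab_semigroup_mult" and h :: "'a \<Rightarrow> 'b::{topological_semigroup_mult,t1_space}" and n :: nat
  assumes per: "\<And>x. \<exists>k\<ge>1. spow x k = e"
    and ide: "e * e = e"
    and n1: "n \<ge> 1" and bnd: "\<And>u. u * e = u \<Longrightarrow> spow u n = e"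
    and ns: "\<And>A::'a set. infinite A \<Longrightarrow> \<not> (\<exists>z. {x * y | x y. x \<in> A \<and> y \<in> A} = {z})"
    and hom: "\<And>x y. h (x * y) = h x * h y"
    and inj: "inj h"
    and iso: "\<And>x. \<exists>W. open W \<and> W \<inter> range h = {h x}"
begin

abbreviation "H \<equiv> {u. u * e = u}"
abbreviation "X1 \<equiv> {u. u * e = e}"

lemma hpow: "h (spow x k) = spow (h x) k" using spow_hom[of h] hom by blast

lemma hmul_in: "b \<in> range h \<Longrightarrow> c \<in> range h \<Longrightarrow> b * c \<in> range h"
  by (auto simp: hom[symmetric])

lemma const_loc:
  assumes "(f \<longlongrightarrow> h c) F" "eventually (\<lambda>x. f x \<in> range h) F"
  shows "eventually (\<lambda>x. f x = h c) F"
proof -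
  obtain W where W: "open W" "W \<inter> range h = {h c}" using iso by blast
  hence "h c \<in> W" by auto
  have "eventually (\<lambda>x. f x \<in> W) F" using assms(1) W(1) \<open>h c \<in> W\<close> topological_tendstoD by blast
  then have "eventually (\<lambda>x. f x \<in> W \<and> f x \<in> range h) F" using assms(2) eventually_conj by blast
  then show ?thesis by (rule eventually_mono) (use W(2) in blast)
qed

lemma ev_in: "eventually (\<lambda>x. x \<in> S) (at t within S)"
  unfolding eventually_at_filter by simp

lemma ev_prod:
  assumes "eventually P F" "eventually Q F"
  shows "eventually (\<lambda>p. P (fst p) \<and> Q (snd p)) (F \<times>\<^sub>F F)"
  unfolding eventually_prod_filter using assms by auto

lemma tl_fst: "(fst \<longlongrightarrow> t) ((at t within S) \<times>\<^sub>F (at t within S))"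
  by (rule filterlim_compose[OF tendsto_ident_at filterlim_fst])
lemma tl_snd: "(snd \<longlongrightarrow> t) ((at t within S) \<times>\<^sub>F (at t within S))"
  by (rule filterlim_compose[OF tendsto_ident_at filterlim_snd])

lemma per_ge: assumes a: "spow x k0 = e" "k0 \<ge> 1" "N \<ge> k0" shows "spow x N * e = spow x N"
proof (cases "N = k0")
  case True then show ?thesis using ide a by simp
next
  case False
  then have "spow x N = spow x (N - k0) * spow x k0" using spow_add[of "N-k0" k0 x] a by simp
  then show ?thesis using a(1) ide by (simp add: mult.assoc)
qed

lemma X1_pow_e: "a * e = e \<Longrightarrow> spow a j * e = e"
proof (induction j)
  case 0 then show ?case by simp
next
  case (Suc j) then show ?case by (cases j) (auto simp: mult.assoc)
qed

lemma X1_prop: "a * e = e \<Longrightarrow> spow a N = e \<Longrightarrow> N \<ge> 1 \<Longrightarrow> M \<ge> N \<Longrightarrow> spow a M = e"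
proof (cases "M = N")
  case False
  assume a: "a * e = e" "spow a N = e" "N \<ge> 1" "M \<ge> N"
  then have "spow a M = spow a (M - N) * spow a N" using False spow_add[of "M-N" N a] by simp
  then show ?thesis using a X1_pow_e by simp
qed simp

lemma X1_zero: "a * e = e \<Longrightarrow> \<exists>k0\<ge>1. \<forall>k\<ge>k0. spow a k = e"
  using per[of a] X1_prop by blast

lemma pow_e: "k \<ge> 1 \<Longrightarrow> spow e k = e"
proof (induction k)
  case 0 then show ?case by simp
next
  case (Suc k) then show ?case using ide by (cases k) auto
qed

lemma H_closed: "closed (h ` H)"
proof -
  define K where "K = 2 * n - 1"
  have K1: "K \<ge> 1" using n1 by (simp add: K_def)
  have sqK: "u * spow u K = e" if "u * e = u" for u
  proof -
    have "u * spow u K = spow u (Suc K)" by (metis spow_Suc[OF K1] mult.commute)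
    also have "Suc K = n + n" using n1 by (simp add: K_def)
    also have "spow u (n + n) = e" using spow_add[OF n1 n1, of u] bnd[OF that] ide by metis
    finally show ?thesis .
  qed
  have canc: "u1 = u2" if "u1 * e = u1" "u2 * e = u2" "u1 * spow u2 K = e" for u1 u2
  proof -
    have "u1 = u1 * spow u2 (Suc K)" using that(1) sqK[OF that(2)] by (simp add: spow_Suc[OF K1] mult.commute)
    also have "\<dots> = (u1 * spow u2 K) * u2" by (simp add: spow_Suc[OF K1] mult.assoc)
    also have "\<dots> = u2" using that(2,3) by (simp add: mult.commute)
    finally show ?thesis .
  qed
  have "closure (h ` H) \<subseteq> h ` H"
  proof
    fix t assume t: "t \<in> closure (h ` H)"
    show "t \<in> h ` H"
    proof (cases "t \<in> range h")
      case True
      then obtain a where a: "t = h a" by auto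
      obtain W where W: "open W" "W \<inter> range h = {h a}" using iso by blast
      have "t \<in> W" using W a by auto
      then have "W \<inter> closure (h ` H) \<noteq> {}" using t by auto
      then have "W \<inter> h ` H \<noteq> {}" using open_Int_closure_eq_empty[OF W(1)] by blast
      then obtain u where u: "u * e = u" "h u \<in> W" by blast
      then have "h u = h a" using W(2) by blast
      then show ?thesis using u a by (metis (mono_tags, lifting) image_eqI mem_Collect_eq)
    next
      case False
      let ?F = "at t within h ` H"
      have cl: "(\<lambda>u. u * spow u K) ` closure (h ` H) \<subseteq> {h e}"
      proof (rule image_closure_subset)
        show "continuous_on (closure (h ` H)) (\<lambda>u. u * spow u K)"
          by (intro continuous_on_mult' continuous_on_spow continuous_on_id)
        show "(\<lambda>u. u * spow u K) ` h ` H \<subseteq> {h e}"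
          using sqK by (auto simp: hpow[symmetric] hom[symmetric])
      qed simp
      then have te: "t * spow t K = h e" using t by auto
      have l1: "(fst \<longlongrightarrow> t) (?F \<times>\<^sub>F ?F)" by (rule tl_fst)
      have l2: "((\<lambda>p. spow (snd p) K) \<longlongrightarrow> spow t K) (?F \<times>\<^sub>F ?F)" by (rule tendsto_spow[OF tl_snd])
      have lim: "((\<lambda>p. fst p * spow (snd p) K) \<longlongrightarrow> h e) (?F \<times>\<^sub>F ?F)"
        using tendsto_mult[OF l1 l2] te by simp
      have "eventually (\<lambda>p. fst p \<in> h ` H \<and> snd p \<in> h ` H) (?F \<times>\<^sub>F ?F)"
        by (rule ev_prod) (rule ev_in)+
      then have "eventually (\<lambda>p. fst p * spow (snd p) K \<in> range h) (?F \<times>\<^sub>F ?F)"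
        by (rule eventually_mono) (auto simp: hpow[symmetric] hom[symmetric])
      from const_loc[OF lim this]
      obtain Pf Pg where P: "eventually Pf ?F" "eventually Pg ?F"
        "\<forall>x y. Pf x \<longrightarrow> Pg y \<longrightarrow> x * spow y K = h e"
        unfolding eventually_prod_filter by auto
      have "eventually (\<lambda>x. Pf x \<and> Pg x) ?F" using P(1,2) eventually_conj by blast
      from INF_at[OF _ t this] False
      have "infinite {x \<in> h ` H. Pf x \<and> Pg x}" by auto
      then obtain x1 x2 where x: "x1 \<in> {x \<in> h ` H. Pf x \<and> Pg x}" "x2 \<in> {x \<in> h ` H. Pf x \<and> Pg x}" "x1 \<noteq> x2"
        by (metis (no_types, lifting) finite.intros(1) finite_insert infinite_imp_nonempty insertCI subsetI finite_subset)
      then obtain u1 u2 where u: "x1 = h u1" "x2 = h u2" "u1 * e = u1" "u2 * e = u2" by auto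
      have "h (u1 * spow u2 K) = h e" using P(3) x u by (simp add: hom hpow)
      then have "u1 * spow u2 K = e" using inj by (simp add: inj_eq)
      then have "u1 = u2" using canc u by blast
      then show ?thesis using x u by simp
    qed
  qed
  then show ?thesis using closure_subset_eq by blast
qed

end


context LL begin

lemma cl_img:
  assumes "z \<in> closure S" "continuous_on UNIV f" "f ` S \<subseteq> T"
  shows "f z \<in> closure T"
proof -
  have "f ` closure S \<subseteq> closure T"
    by (rule image_closure_subset) (use assms closure_subset in \<open>auto intro: continuous_on_subset\<close>)
  then show ?thesis using assms(1) by auto
qed

lemma cl_pow: "z \<in> closure (range h) \<Longrightarrow> spow z k \<in> closure (range h)"
  by (rule cl_img[where f="\<lambda>u. spow u k"]) (auto intro!: continuous_on_spow continuous_on_id simp: hpow[symmetric] closure_subset[THEN subsetD])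

lemma cl_mulr: "z \<in> closure (range h) \<Longrightarrow> z * h x \<in> closure (range h)"
  by (rule cl_img[where f="\<lambda>u. u * h x"]) (auto intro!: continuous_on_mult' continuous_on_id continuous_on_const simp: hom[symmetric] closure_subset[THEN subsetD])

lemma F1:
  assumes z: "z \<in> closure (range h)" "z \<notin> range h"
  shows "z * z \<notin> range h"
proof
  assume "z * z \<in> range h"
  then obtain x where x: "z * z = h x" by auto
  let ?F = "at z within range h"
  have lim: "((\<lambda>p. fst p * snd p) \<longlongrightarrow> h x) (?F \<times>\<^sub>F ?F)"
  proof -
    have l1: "(fst \<longlongrightarrow> z) (?F \<times>\<^sub>F ?F)" by (rule tl_fst)
    have l2: "(snd \<longlongrightarrow> z) (?F \<times>\<^sub>F ?F)" by (rule tl_snd)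
    show ?thesis using tendsto_mult[OF l1 l2] x by simp
  qed
  have "eventually (\<lambda>p. fst p \<in> range h \<and> snd p \<in> range h) (?F \<times>\<^sub>F ?F)"
    by (rule ev_prod) (rule ev_in)+
  then have "eventually (\<lambda>p. fst p * snd p \<in> range h) (?F \<times>\<^sub>F ?F)"
    by (rule eventually_mono) (auto simp: hmul_in)
  from const_loc[OF lim this]
  obtain Pf Pg where P: "eventually Pf ?F" "eventually Pg ?F"
    "\<forall>x' y. Pf x' \<longrightarrow> Pg y \<longrightarrow> x' * y = h x"
    unfolding eventually_prod_filter by auto
  have "eventually (\<lambda>x. Pf x \<and> Pg x) ?F" using P(1,2) eventually_conj by blast
  from INF_at[OF z(2) z(1) this]
  have inf0: "infinite {b \<in> range h. Pf b \<and> Pg b}" .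
  define A where "A = {a. Pf (h a) \<and> Pg (h a)}"
  have "{b \<in> range h. Pf b \<and> Pg b} = h ` A" unfolding A_def by auto
  then have infA: "infinite A" using inf0 by auto
  have "{a * b | a b. a \<in> A \<and> b \<in> A} = {x}"
  proof
    show "{a * b | a b. a \<in> A \<and> b \<in> A} \<subseteq> {x}"
    proof
      fix c assume "c \<in> {a * b | a b. a \<in> A \<and> b \<in> A}"
      then obtain a b where ab: "c = a * b" "a \<in> A" "b \<in> A" by blast
      then have "h (a * b) = h x" using P(3) unfolding A_def by (simp add: hom)
      then show "c \<in> {x}" using inj ab(1) by (simp add: inj_eq)
    qed
    obtain a where "a \<in> A" using infA by (metis finite.emptyI ex_in_conv)
    then have "a * a \<in> {a * b | a b. a \<in> A \<and> b \<in> A}" by blast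
    moreover have "h (a * a) = h x" using \<open>a \<in> A\<close> P(3) unfolding A_def by (simp add: hom)
    then have "a * a = x" using inj by (simp add: inj_eq)
    ultimately show "{x} \<subseteq> {a * b | a b. a \<in> A \<and> b \<in> A}" by simp
  qed
  then show False using ns[OF infA] by blast
qed

lemma F1_iter:
  assumes z: "z \<in> closure (range h)" "z \<notin> range h"
  shows "spow z (2^J) \<notin> range h \<and> spow z (2^J) \<in> closure (range h)"
proof (induction J)
  case 0 then show ?case using z by simp
next
  case (Suc J)
  have "spow z (2^Suc J) = spow z (2^J) * spow z (2^J)"
    using spow_add[of "2^J" "2^J" z] by (simp add: mult_2)
  then show ?case using F1 Suc cl_pow[OF z(1)] by metis
qed

lemma F3:
  assumes z: "z \<in> closure (range h)" "z \<notin> range h"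
  shows "z * h x \<in> range h"
proof (rule ccontr)
  assume w: "z * h x \<notin> range h"
  have wc: "z * h x \<in> closure (range h)" using cl_mulr[OF z(1)] .
  obtain k0 where k0: "k0 \<ge> 1" "spow x k0 = e" using per by blast
  define N where "N = (2::nat) ^ k0"
  have Nk: "N \<ge> k0" unfolding N_def by (simp add: less_imp_le)
  have "(\<lambda>u. spow (u * h x) N) z \<in> closure (h ` H)"
  proof (rule cl_img[OF z(1)])
    show "continuous_on UNIV (\<lambda>u. spow (u * h x) N)"
      by (intro continuous_on_spow continuous_on_mult' continuous_on_id continuous_on_const)
    show "(\<lambda>u. spow (u * h x) N) ` range h \<subseteq> h ` H"
    proof
      fix b assume "b \<in> (\<lambda>u. spow (u * h x) N) ` range h"
      then obtain a where a: "b = spow (h a * h x) N" by auto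
      have "b = h (spow a N * spow x N)" using a by (simp add: hom[symmetric] hpow[symmetric] spow_mult_distrib)
      moreover have "spow a N * spow x N * e = spow a N * spow x N"
        using per_ge[OF k0(2) k0(1) Nk] by (simp add: mult.assoc)
      ultimately show "b \<in> h ` H" by blast
    qed
  qed
  then have "spow (z * h x) N \<in> range h" using H_closed closure_closed by auto
  then show False using F1_iter[OF wc w] unfolding N_def by blast
qed

lemma D_pow:
  assumes z: "z \<in> closure (range h)" "z \<notin> range h" and k: "k \<ge> 1"
  shows "spow z k \<notin> range h"
proof
  assume "spow z k \<in> range h"
  then obtain x where x: "spow z k = h x" by auto
  have step: "\<forall>x. spow z a * h x \<in> range h" if "a \<ge> 1" for a
    using that
  proof (induction a)
    case 0 then show ?case by simp
  next
    case (Suc a)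
    show ?case
    proof (cases a)
      case 0 then show ?thesis using F3[OF z] by simp
    next
      case (Suc a')
      show ?thesis
      proof
        fix x
        obtain x' where "z * h x = h x'" using F3[OF z, of x] by auto
        then have "spow z (Suc a) * h x = spow z a * h x'"
          using spow_Suc[of a z] Suc by (simp add: mult.assoc)
        then show "spow z (Suc a) * h x \<in> range h" using Suc.IH Suc by simp
      qed
    qed
  qed
  define J where "J = k"
  have kJ: "2^J > k" unfolding J_def by simp
  have "spow z (2^J) = spow z (2^J - k) * spow z k"
    using spow_add[of "2^J - k" k z] k kJ by simp
  then have "spow z (2^J) \<in> range h" using step[of "2^J - k"] kJ x by simp
  then show False using F1_iter[OF z] by blast
qed

end


context LL begin

context
  fixes y1 assumes y1c: "y1 \<in> closure (h ` X1)" and y1n: "y1 \<notin> range h"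
begin

lemma y1c': "y1 \<in> closure (range h)"
  using y1c closure_mono[of "h ` X1" "range h"] by auto

abbreviation "FF \<equiv> at y1 within h ` X1"

lemma pick: "eventually P FF \<Longrightarrow> \<exists>a. a * e = e \<and> P (h a)"
proof -
  assume "eventually P FF"
  from INF_at[OF _ y1c this] y1n have "infinite {x \<in> h ` X1. P x}" by auto
  then obtain x where "x \<in> {x \<in> h ` X1. P x}" by (metis finite.emptyI ex_in_conv)
  then show ?thesis by auto
qed

lemma evZ: "eventually (\<lambda>b. \<forall>a. b = h a \<longrightarrow> a * e = e) FF"
  using ev_in[of "h ` X1" y1] by (rule eventually_mono) (auto simp: inj_eq[OF inj])

lemma E1: "N \<ge> 1 \<Longrightarrow> eventually (\<lambda>b. \<forall>a. b = h a \<longrightarrow> spow a N \<noteq> e) FF"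
proof -
  assume N: "N \<ge> 1"
  have lim: "((\<lambda>b. spow b (2^N)) \<longlongrightarrow> spow y1 (2^N)) FF"
    by (rule tendsto_spow[OF tendsto_ident_at])
  have "spow y1 (2^N) \<noteq> h e" using F1_iter[OF y1c' y1n, of N] by auto
  from tendsto_imp_eventually_ne[OF lim this]
  have "eventually (\<lambda>b. spow b (2^N) \<noteq> h e) FF" .
  then have "eventually (\<lambda>b. spow b (2^N) \<noteq> h e \<and> (\<forall>a. b = h a \<longrightarrow> a * e = e)) FF"
    using evZ eventually_conj by blast
  then show ?thesis
  proof (rule eventually_mono, intro allI impI)
    fix b a assume b: "spow b (2^N) \<noteq> h e \<and> (\<forall>a. b = h a \<longrightarrow> a * e = e)" and a: "b = h a"
    then have ae: "a * e = e" and ne: "spow a (2^N) \<noteq> e" by (auto simp: hpow[symmetric])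
    show "spow a N \<noteq> e"
    proof
      assume "spow a N = e"
      then have "spow a (2^N) = e" using X1_prop[OF ae _ N, of "2^N"] by (simp add: less_imp_le)
      then show False using ne by simp
    qed
  qed
qed

lemma itm_e: "a * e = e \<Longrightarrow> itm a k e = e"
  by (induction k) (simp_all add: itm_Suc)

lemma E2:
  assumes c: "c * e = e" "c * c = e"
  shows "\<exists>T. eventually (\<lambda>b. \<forall>a. b = h a \<longrightarrow> itm a T c = e) FF"
proof -
  define cs where "cs = rec_nat c (\<lambda>r u. SOME v. h v = y1 * h u)"
  have cs0: "cs 0 = c" unfolding cs_def by simp
  have hcs: "h (cs (Suc r)) = y1 * h (cs r)" for r
  proof -
    have "cs (Suc r) = (SOME v. h v = y1 * h (cs r))" unfolding cs_def by simp
    moreover have "\<exists>v. h v = y1 * h (cs r)" using F3[OF y1c' y1n, of "cs r"] by (metis imageE)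
    ultimately show ?thesis by (metis (mono_tags, lifting) someI_ex)
  qed
  have loc: "eventually (\<lambda>b. \<forall>a. b = h a \<longrightarrow> a * cs r = cs (Suc r)) FF" for r
  proof -
    have lim: "((\<lambda>b. b * h (cs r)) \<longlongrightarrow> h (cs (Suc r))) FF"
      unfolding hcs by (intro tendsto_mult tendsto_ident_at tendsto_const)
    have "eventually (\<lambda>b. b * h (cs r) \<in> range h) FF"
      using ev_in[of "h ` X1" y1] by (rule eventually_mono) (auto simp: hom[symmetric])
    from const_loc[OF lim this] show ?thesis
      by (rule eventually_mono) (auto simp: hom[symmetric] inj_eq[OF inj])
  qed
  have locR: "eventually (\<lambda>b. (\<forall>a. b = h a \<longrightarrow> a * e = e) \<and> (\<forall>a. b = h a \<longrightarrow> (\<forall>r<R. a * cs r = cs (Suc r)))) FF" for R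
  proof -
    have "eventually (\<lambda>b. \<forall>r\<in>{..<R}. \<forall>a. b = h a \<longrightarrow> a * cs r = cs (Suc r)) FF"
      by (rule eventually_ball_finite) (auto intro: loc)
    from eventually_conj[OF evZ this] show ?thesis by (rule eventually_mono) auto
  qed
  have form: "cs r = itm a r c" if "\<forall>r<R. a * cs r = cs (Suc r)" "r \<le> R" for a R r
    using that(2)
  proof (induction r)
    case 0 then show ?case by (simp add: cs0)
  next
    case (Suc r)
    then have "r < R" "cs r = itm a r c" by auto
    then have "a * cs r = cs (Suc r)" using that(1) by blast
    then show ?case using \<open>cs r = itm a r c\<close> itm_Suc[of a r c] by simp
  qed
  have getA: "\<exists>a. a * e = e \<and> (\<forall>r\<le>R. cs r = itm a r c)" for R
  proof -
    obtain a where "a * e = e" "\<forall>r<R. a * cs r = cs (Suc r)" using pick[OF locR[of R]] by blast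
    then show ?thesis using form by blast
  qed
  have prod: "cs r * cs s = e" for r s
  proof -
    obtain a where a: "a * e = e" "\<forall>q\<le>r+s. cs q = itm a q c" using getA by blast
    have "cs r * cs s = itm a r c * itm a s c" using a by simp
    also have "\<dots> = itm a (r + s) e" using c by (simp add: itm_prod)
    also have "\<dots> = e" using a(1) itm_e by blast
    finally show ?thesis .
  qed
  show ?thesis
  proof (cases "finite (range cs)")
    case False
    have "{x * y | x y. x \<in> range cs \<and> y \<in> range cs} = {e}"
    proof
      show "{x * y | x y. x \<in> range cs \<and> y \<in> range cs} \<subseteq> {e}" using prod by auto
      have "cs 0 * cs 0 \<in> {x * y | x y. x \<in> range cs \<and> y \<in> range cs}" by blast
      then show "{e} \<subseteq> {x * y | x y. x \<in> range cs \<and> y \<in> range cs}" using prod by simp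
    qed
    then show ?thesis using ns[OF False] by blast
  next
    case True
    have "\<not> inj cs" using True finite_imageD[of cs UNIV] by auto
    then obtain r r' where rr: "r < r'" "cs r = cs r'"
      unfolding inj_def by (metis linorder_neqE_nat)
    obtain a where a: "a * e = e" "\<forall>q\<le>r'. cs q = itm a q c" using getA by blast
    define p where "p = r' - r"
    have p: "p \<ge> 1" using rr by (simp add: p_def)
    have "cs r = itm a r c" using a rr by simp
    then have "itm a p (cs r) = itm a (p + r) c" by (simp add: itm_add)
    also have "p + r = r'" using rr by (simp add: p_def)
    finally have "itm a p (cs r) = itm a r' c" .
    then have fix1: "itm a p (cs r) = cs r" using a rr by simp
    have fixj: "itm a (p * j) (cs r) = cs r" for j
    proof (induction j)
      case 0 then show ?case by simp
    next
      case (Suc j)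
      have "itm a (p * Suc j) (cs r) = itm a p (itm a (p * j) (cs r))" by (simp add: itm_add)
      then show ?case using Suc fix1 by simp
    qed
    obtain k0 where k0: "k0 \<ge> 1" "\<forall>k\<ge>k0. spow a k = e" using X1_zero[OF a(1)] by blast
    have "itm a (p * k0) (cs r) = spow a (p * k0) * cs r"
      using p k0 by (intro itm_spow) simp
    also have "spow a (p * k0) = e"
    proof -
      have "p * k0 \<ge> k0" using p by simp
      then show ?thesis using k0(2) by blast
    qed
    finally have "itm a (p * k0) (cs r) = e * cs r" .
    then have "cs r = e * cs r" using fixj[of k0] by simp
    also have "e * cs r = cs r * e" by (simp add: mult.commute)
    also have "cs r * e = e"
    proof -
      obtain a' where a': "a' * e = e" "\<forall>q\<le>r. cs q = itm a' q c" using getA by blast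
      have "cs r * e = itm a' r (c * e)" using a' by (simp add: itm_mult)
      also have "\<dots> = itm a' r e" using c by simp
      also have "\<dots> = e" using a'(1) itm_e by blast
      finally show ?thesis .
    qed
    finally have cre: "cs r = e" .
    have "eventually (\<lambda>b. \<forall>a. b = h a \<longrightarrow> itm a r c = e) FF"
      using locR[of r]
    proof (rule eventually_mono, intro allI impI)
      fix b a assume b: "(\<forall>a. b = h a \<longrightarrow> a * e = e) \<and> (\<forall>a. b = h a \<longrightarrow> (\<forall>q<r. a * cs q = cs (Suc q)))"
        and ba: "b = h a"
      then have "\<forall>q<r. a * cs q = cs (Suc q)" by blast
      from form[OF this, of r] cre show "itm a r c = e" by simp
    qed
    then show ?thesis by blast
  qed
qed

lemma E3:
  assumes Fin: "finite Fn" "\<forall>u\<in>Fn. u * e = e" "\<forall>u\<in>Fn. \<forall>v\<in>Fn. u * v = e"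
  shows "\<exists>d. d * e = e \<and> d \<notin> Fn \<and> d * d = e \<and> (\<forall>u\<in>Fn. d * u = e)"
proof -
  have "\<forall>u\<in>Fn. \<exists>T. eventually (\<lambda>b. \<forall>a. b = h a \<longrightarrow> itm a T u = e) FF"
    using E2 Fin(2,3) by blast
  from bchoice[OF this] obtain Tf where Tf: "\<forall>u\<in>Fn. eventually (\<lambda>b. \<forall>a. b = h a \<longrightarrow> itm a (Tf u) u = e) FF"
    by blast
  define T0 where "T0 = sum Tf Fn"
  define c where "c = card Fn"
  define N where "N = T0 + 2 * c + 2"
  have N1: "N \<ge> 1" unfolding N_def by simp
  have ev1: "eventually (\<lambda>b. \<forall>u\<in>Fn. \<forall>a. b = h a \<longrightarrow> itm a (Tf u) u = e) FF"
    by (rule eventually_ball_finite[OF Fin(1) Tf])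
  have ev: "eventually (\<lambda>b. (\<forall>u\<in>Fn. \<forall>a. b = h a \<longrightarrow> itm a (Tf u) u = e) \<and> (\<forall>a. b = h a \<longrightarrow> spow a N \<noteq> e) \<and> (\<forall>a. b = h a \<longrightarrow> a * e = e)) FF"
    using eventually_conj[OF ev1 eventually_conj[OF E1[OF N1] evZ]] .
  obtain a where a: "a * e = e" "\<forall>u\<in>Fn. itm a (Tf u) u = e" "spow a N \<noteq> e"
    using pick[OF ev] by auto
  have au: "itm a t u = e" if "u \<in> Fn" "t \<ge> T0" for u t
  proof -
    have "Tf u \<le> T0" unfolding T0_def using that(1) Fin(1) by (intro member_le_sum) auto
    then have "itm a t u = itm a (t - Tf u) (itm a (Tf u) u)" using that(2) by (simp add: itm_add)
    also have "\<dots> = itm a (t - Tf u) e" using a(2) that(1) by simp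
    also have "\<dots> = e" using itm_e a(1) by blast
    finally show ?thesis .
  qed
  obtain k0 where k0: "k0 \<ge> 1" "\<forall>k\<ge>k0. spow a k = e" using X1_zero[OF a(1)] by blast
  define K where "K = {k. k \<ge> 1 \<and> spow a k \<noteq> e}"
  have finK: "finite K"
  proof (rule finite_subset[of _ "{..<k0}"])
    show "K \<subseteq> {..<k0}" using k0 unfolding K_def by (auto simp: not_less[symmetric])
  qed simp
  have NK: "N \<in> K" using N1 a(3) unfolding K_def by simp
  define s where "s = Max K"
  have sK: "s \<in> K" using Max_in[OF finK] NK unfolding s_def by blast
  have Ns: "N \<le> s" using Max_ge[OF finK NK] unfolding s_def .
  have notK: "spow a k = e" if "k > s" for k
  proof (rule ccontr)
    assume "spow a k \<noteq> e"
    then have "k \<in> K" using that unfolding K_def by simp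
    then show False using Max_ge[OF finK, of k] that unfolding s_def by simp
  qed
  define I where "I = {s - c .. s}"
  have tI: "t \<ge> 1 \<and> t \<ge> T0 \<and> t + t > s \<and> t \<le> s" if "t \<in> I" for t
    using that Ns unfolding I_def N_def by auto
  have ne: "spow a t \<noteq> e" if "t \<in> I" for t
  proof
    assume "spow a t = e"
    then have "spow a s = e" using X1_prop[OF a(1), of t s] tI[OF that] by simp
    then show False using sK unfolding K_def by simp
  qed
  have lt: "spow a t \<noteq> spow a t'" if "t \<in> I" "t' \<in> I" "t < t'" for t t'
  proof
    assume eq: "spow a t = spow a t'"
    define p where "p = t' - t"
    have p: "p \<ge> 1" "t' = t + p" using that(3) unfolding p_def by auto
    have t1: "t \<ge> 1" using tI[OF that(1)] by simp
    have cyc: "spow a (t + p * j) = spow a t" for j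
    proof (induction j)
      case 0 then show ?case by simp
    next
      case (Suc j)
      have "spow a (t + p * Suc j) = spow a (t + p * j + p)" by (simp add: algebra_simps)
      also have "\<dots> = spow a (t + p * j) * spow a p" using t1 p(1) by (intro spow_add) auto
      also have "\<dots> = spow a t * spow a p" using Suc by simp
      also have "\<dots> = spow a (t + p)" using t1 p(1) by (intro spow_add[symmetric]) auto
      also have "\<dots> = spow a t" using eq p(2) by simp
      finally show ?case .
    qed
    have "t + p * k0 \<ge> k0" using p(1) by (simp add: trans_le_add2)
    then have "spow a (t + p * k0) = e" using k0(2) by blast
    then show False using cyc[of k0] ne[OF that(1)] by simp
  qed
  have injD: "inj_on (spow a) I"
  proof (rule inj_onI)
    fix t t' assume "t \<in> I" "t' \<in> I" "spow a t = spow a t'"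
    then show "t = t'"
    proof (cases t t' rule: linorder_cases)
      case less then show ?thesis using lt \<open>t \<in> I\<close> \<open>t' \<in> I\<close> \<open>spow a t = spow a t'\<close> by blast
    next
      case greater then show ?thesis using lt \<open>t \<in> I\<close> \<open>t' \<in> I\<close> \<open>spow a t = spow a t'\<close> by metis
    qed
  qed
  have cs: "c \<le> s" using Ns unfolding N_def by simp
  have "card (spow a ` I) = Suc c" using card_image[OF injD] cs unfolding I_def by simp
  then have "\<not> spow a ` I \<subseteq> Fn"
  proof (intro notI)
    assume "spow a ` I \<subseteq> Fn"
    from card_mono[OF Fin(1) this] \<open>card (spow a ` I) = Suc c\<close> show False unfolding c_def by simp
  qed
  then obtain t where t: "t \<in> I" "spow a t \<notin> Fn" by blast
  have "spow a t * e = e" using X1_pow_e[OF a(1)] .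
  moreover have "spow a t * spow a t = e"
    using spow_add[of t t a, symmetric] tI[OF t(1)] notK[of "t + t"] by simp
  moreover have "\<forall>u\<in>Fn. spow a t * u = e"
  proof
    fix u assume u: "u \<in> Fn"
    have "t \<ge> 1" "t \<ge> T0" using tI[OF t(1)] by auto
    then show "spow a t * u = e" using au[OF u] itm_spow[of t a u] by simp
  qed
  ultimately show ?thesis using t(2) by blast
qed

lemma E4: False
proof -
  define P where "P = (\<lambda>F d. d * e = e \<and> d \<notin> F \<and> d * d = e \<and> (\<forall>u\<in>F. d * u = e))"
  define ext where "ext = (\<lambda>F. SOME d. P F d)"
  define S where "S = rec_nat {} (\<lambda>k F. insert (ext F) F)"
  have S0: "S 0 = {}" unfolding S_def by simp
  have SS: "S (Suc k) = insert (ext (S k)) (S k)" for k unfolding S_def by simp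
  have inv: "finite (S k) \<and> (\<forall>u\<in>S k. u * e = e) \<and> (\<forall>u\<in>S k. \<forall>v\<in>S k. u * v = e) \<and> card (S k) = k" for k
  proof (induction k)
    case 0 then show ?case by (simp add: S0)
  next
    case (Suc k)
    then have "\<exists>d. P (S k) d" using E3 unfolding P_def by blast
    then have d: "P (S k) (ext (S k))" unfolding ext_def by (rule someI_ex)
    show ?case using Suc d unfolding SS P_def by (auto simp: mult.commute)
  qed
  have mono: "S k \<subseteq> S (k + j)" for k j
    by (induction j) (auto simp: SS)
  define A where "A = (\<Union>k. S k)"
  have cl: "u * v = e" if uv: "u \<in> A" "v \<in> A" for u v
  proof -
    obtain k1 k2 where "u \<in> S k1" "v \<in> S k2" using uv unfolding A_def by blast
    then have "u \<in> S (k1 + k2)" "v \<in> S (k2 + k1)" using mono by blast+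
    then show ?thesis using inv[of "k1 + k2"] by (simp add: add.commute)
  qed
  have infA: "infinite A"
  proof
    assume fA: "finite A"
    have "card (S (Suc (card A))) \<le> card A" using card_mono[OF fA] unfolding A_def by blast
    then show False using inv[of "Suc (card A)"] by simp
  qed
  have "{x * y | x y. x \<in> A \<and> y \<in> A} = {e}"
  proof
    show "{x * y | x y. x \<in> A \<and> y \<in> A} \<subseteq> {e}" using cl by auto
    obtain a where "a \<in> A" using infA by (metis finite.emptyI ex_in_conv)
    then have "a * a \<in> {x * y | x y. x \<in> A \<and> y \<in> A}" by blast
    then show "{e} \<subseteq> {x * y | x y. x \<in> A \<and> y \<in> A}" using cl \<open>a \<in> A\<close> by simp
  qed
  then show False using ns[OF infA] by blast
qed

end

lemma main: "closed (range h)"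
proof (rule ccontr)
  assume "\<not> closed (range h)"
  then obtain y where y: "y \<in> closure (range h)" "y \<notin> range h"
    using closure_subset_eq by blast
  have "spow y n \<in> closure (h ` X1)"
  proof (rule cl_img[OF y(1)])
    show "continuous_on UNIV (\<lambda>u::'b. spow u n)" by (rule continuous_on_spow[OF continuous_on_id])
    show "(\<lambda>u. spow u n) ` range h \<subseteq> h ` X1"
    proof
      fix b assume "b \<in> (\<lambda>u. spow u n) ` range h"
      then obtain a where a: "b = spow (h a) n" by auto
      have "spow a n * e = spow a n * spow e n" using pow_e[OF n1] by simp
      also have "\<dots> = spow (a * e) n" by (simp add: spow_mult_distrib)
      also have "\<dots> = e" using bnd[of "a * e"] ide by (simp add: mult.assoc)
      finally have "spow a n * e = e" .
      then show "b \<in> h ` X1" using a by (auto simp: hpow[symmetric])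
    qed
  qed
  moreover have "spow y n \<notin> range h" using D_pow[OF y n1] .
  ultimately show False using E4 by blast
qed

end



theorem lemma4p3:
  fixes e :: "'a::ab_semigroup_mult"
  assumes "periodic_semigroup TYPE('a)"
    and "idempotent e" and "\<forall>f::'a. idempotent f \<longrightarrow> f = e"
    and "bounded_group (max_subgroup e) e"
    and "\<forall>A::'a set. infinite A \<longrightarrow> \<not> (\<exists>z. {x * y | x y. x \<in> A \<and> y \<in> A} = {z})"
  shows "T1S_closed_in TYPE('b::{topological_semigroup_mult,t1_space}) TYPE('a)"
proof -
  obtain n where n: "n \<ge> 1" "\<forall>x\<in>max_subgroup e. spow x n = e"
    using assms(4) unfolding bounded_group_def by blast
  have per: "\<exists>k\<ge>1. spow x k = e" for x
    using assms(1,3) unfolding periodic_semigroup_def by blast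
  have ide: "e * e = e" using assms(2) unfolding idempotent_def .
  have inv: "\<exists>y\<in>{u. u * e = u}. x * y = e \<and> y * x = e" if x: "x * e = x" for x
  proof -
    obtain k where k: "k \<ge> 1" "spow x k = e" using per by blast
    show ?thesis
    proof (cases k)
      case 0 then show ?thesis using k by simp
    next
      case (Suc j)
      show ?thesis
      proof (cases j)
        case 0
        then have "x = e" using k Suc by simp
        then show ?thesis using ide by auto
      next
        case (Suc j')
        define y where "y = spow x j * e"
        have "y * e = y" unfolding y_def using ide by (simp add: mult.assoc)
        moreover have "x * y = e"
        proof -
          have "x * y = (spow x j * x) * e" unfolding y_def by (simp add: ac_simps)
          also have "spow x j * x = spow x k" using \<open>k = Suc j\<close> Suc by simp
          finally show ?thesis using k ide by simp
        qed
        ultimately show ?thesis by (auto simp: mult.commute)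
      qed
    qed
  qed
  have sub: "is_subgroup {u. u * e = u}"
    unfolding is_subgroup_def
  proof
    show "\<forall>x\<in>{u. u * e = u}. \<forall>y\<in>{u. u * e = u}. x * y \<in> {u. u * e = u}" by (simp add: mult.assoc)
    have "\<forall>x\<in>{u. u * e = u}. e * x = x \<and> x * e = x \<and> (\<exists>y\<in>{u. u * e = u}. x * y = e \<and> y * x = e)"
    proof
      fix x assume x: "x \<in> {u. u * e = u}"
      then have "x * e = x" by simp
      moreover then have "e * x = x" by (simp add: mult.commute)
      ultimately show "e * x = x \<and> x * e = x \<and> (\<exists>y\<in>{u. u * e = u}. x * y = e \<and> y * x = e)"
        using inv by blast
    qed
    moreover have "e \<in> {u. u * e = u}" using ide by simp
    ultimately show "\<exists>u\<in>{u. u * e = u}. \<forall>x\<in>{u. u * e = u}. u * x = x \<and> x * u = x \<and> (\<exists>y\<in>{u. u * e = u}. x * y = u \<and> y * x = u)"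
      by blast
  qed
  have bnd: "spow u n = e" if "u * e = u" for u
  proof -
    have "{u. u * e = u} \<in> {G. e \<in> G \<and> is_subgroup G}" using sub ide by simp
    moreover have "u \<in> {u. u * e = u}" using that by simp
    ultimately have "u \<in> max_subgroup e" unfolding max_subgroup_def by (rule UnionI)
    then show ?thesis using n(2) by blast
  qed
  show ?thesis unfolding T1S_closed_in_def
  proof (intro allI impI)
    fix h :: "'a \<Rightarrow> 'b"
    assume h: "(\<forall>x y. h (x * y) = h x * h y) \<and> embedding_map (discrete_topology UNIV) euclidean h"
    then have hm: "homeomorphic_map (discrete_topology UNIV) (subtopology euclidean (range h)) h"
      unfolding embedding_map_def by simp
    have inj: "inj h" using homeomorphic_imp_injective_map[OF hm] by simp
    have iso: "\<exists>W. open W \<and> W \<inter> range h = {h x}" for x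
    proof -
      have "openin (subtopology euclidean (range h)) (h ` {x})"
        using homeomorphic_map_openness[OF hm, of "{x}"] by simp
      then obtain T where "openin euclidean T" "h ` {x} = T \<inter> range h"
        unfolding openin_subtopology by blast
      then show ?thesis using open_openin by auto
    qed
    note ns = assms(5)[rule_format]
    have hom: "\<And>x y. h (x * y) = h x * h y" using h by blast
    have L: "LL e h n"
      apply (rule LL.intro)
             apply (rule per)
            apply (rule ide)
           apply (rule n(1))
          apply (erule bnd)
         apply (erule ns)
        apply (rule hom)
       apply (rule inj)
      apply (rule iso)
      done
    show "closed (range h)" by (rule LL.main[OF L])
  qed
qed



end
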